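(* Let $t\in[0,1]$. For each $n$ let $\boldsymbol{g}\in\mathbb{R}^n$ be a deterministic vector with $\|\boldsymbol{g}\|_2^2=O(n^{(1-t)/(1+t)})$, and let $b=b_n$ satisfy $b=\Omega(n^{-t/(1+t)})$. Let $\boldsymbol{w}=(w_1,\ldots,w_n)^\top$ have i.i.d. entries from $\mathbb{P}_w\in\mathcal{D}_1\cup\mathcal{D}_2$ (not depending on $n$). Then for any fixed $\delta>0$, $$\lim_{n\to\infty}\mathbb{P}\Bigl(\frac{|\boldsymbol{w}^\top\boldsymbol{g}|}{b\|\boldsymbol{w}\|_2^2}>\delta\Bigr)=0.$$
   Context: For $s>0$, $\mathcal{D}_s$ is the class of distributions of $\xi$ with $\mathbb{E}[\xi]=0$ and $1\le\mathbb{E}[|\xi|^s]\le2$. $a_n=O(c_n)$ means $|a_n|\le C|c_n|$ for a constant $C$; $b=\Omega(c_n)$ means $|c_n|\le C|b|$ for a constant $C>0$. Convention: $a/0=\infty$. *)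

theory Defs
  imports "HOL-Probability.Probability"
begin

definition distr_class :: "real \<Rightarrow> real measure \<Rightarrow> bool" where
  "distr_class s P \<longleftrightarrow>
     prob_space P \<and> sets P = sets borel \<and>
     integrable P (\<lambda>x. x) \<and> (\<integral>x. x \<partial>P) = 0 \<and>
     integrable P (\<lambda>x. \<bar>x\<bar> powr s) \<and>
     1 \<le> (\<integral>x. \<bar>x\<bar> powr s \<partial>P) \<and> (\<integral>x. \<bar>x\<bar> powr s \<partial>P) \<le> 2"

end

theory Submission
  imports Defs
begin

lemma (in prob_space) sum_sq_indep:
  fixes Y :: "nat \<Rightarrow> 'a \<Rightarrow> real"
  assumes ind: "indep_vars (\<lambda>_. borel) Y UNIV"
   and int1: "\<And>i. integrable M (Y i)" and int2: "\<And>i. integrable M (\<lambda>x. (Y i x)^2)"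
   and mean: "\<And>i. expectation (Y i) = 0"
  shows "integrable M (\<lambda>x. (\<Sum>i<n. c i * Y i x)^2) \<and>
    expectation (\<lambda>x. (\<Sum>i<n. c i * Y i x)^2) = (\<Sum>i<n. (c i)^2 * expectation (\<lambda>x. (Y i x)^2))"
proof -
  have prod: "integrable M (\<lambda>x. Y i x * Y j x) \<and> expectation (\<lambda>x. Y i x * Y j x) =
     (if i = j then expectation (\<lambda>x. (Y i x)^2) else 0)" for i j
  proof (cases "i = j")
    case True then show ?thesis using int2[of i] by (simp add: power2_eq_square)
  next
    case False
    have I: "indep_vars (\<lambda>_. borel) Y {i,j}" using indep_vars_subset[OF ind] by auto
    have "integrable M (\<lambda>x. (\<Prod>k\<in>{i,j}. Y k x))"
      by (rule indep_vars_integrable[OF _ I]) (auto intro: int1)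
    moreover have "expectation (\<lambda>x. (\<Prod>k\<in>{i,j}. Y k x)) = (\<Prod>k\<in>{i,j}. expectation (Y k))"
      by (rule indep_vars_lebesgue_integral[OF _ I]) (auto intro: int1)
    ultimately show ?thesis using False mean by simp
  qed
  have eq: "(\<Sum>i<n. c i * Y i x)^2 = (\<Sum>i<n. \<Sum>j<n. c i * c j * (Y i x * Y j x))" for x
    by (simp add: power2_eq_square sum_product mult_ac)
  have "integrable M (\<lambda>x. (\<Sum>i<n. \<Sum>j<n. c i * c j * (Y i x * Y j x)))"
    using prod by simp
  moreover have "expectation (\<lambda>x. (\<Sum>i<n. \<Sum>j<n. c i * c j * (Y i x * Y j x))) =
      (\<Sum>i<n. \<Sum>j<n. c i * c j * expectation (\<lambda>x. Y i x * Y j x))"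
    using prod by (simp add: integral_sum integrable_sum)
  moreover have "\<dots> = (\<Sum>i<n. (c i)^2 * expectation (\<lambda>x. (Y i x)^2))"
  proof (rule sum.cong[OF refl])
    fix i assume "i \<in> {..<n}"
    have "(\<Sum>j<n. c i * c j * expectation (\<lambda>x. Y i x * Y j x)) =
        (\<Sum>j<n. if j = i then (c i)^2 * expectation (\<lambda>x. (Y i x)^2) else 0)"
    proof (rule sum.cong[OF refl])
      fix j
      show "c i * c j * expectation (\<lambda>x. Y i x * Y j x) =
        (if j = i then (c i)^2 * expectation (\<lambda>x. (Y i x)^2) else 0)"
      proof (cases "j = i")
        case True
        then show ?thesis using prod[of i i] by (simp add: power2_eq_square)
      next
        case False
        then show ?thesis using prod[of i j] by simp
      qed
    qed
    also have "\<dots> = (c i)^2 * expectation (\<lambda>x. (Y i x)^2)"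
      using \<open>i \<in> {..<n}\<close> by simp
    finally show "(\<Sum>j<n. c i * c j * expectation (\<lambda>x. Y i x * Y j x)) = (c i)^2 * expectation (\<lambda>x. (Y i x)^2)" .
  qed
  ultimately show ?thesis unfolding eq by simp
qed

lemma (in prob_space) sumsq_lower:
  fixes w :: "nat \<Rightarrow> 'a \<Rightarrow> real"
  assumes meas[measurable]: "\<And>i. w i \<in> borel_measurable M"
  and ind: "indep_vars (\<lambda>_. borel) w UNIV"
  and K: "K > 0"
  and m: "\<And>i. expectation (\<lambda>x. min ((w i x)^2) K) = m"
  and lt: "Mm < m"
  shows "(\<lambda>n. measure M {x\<in>space M. (\<Sum>i<n. (w i x)^2) \<le> Mm * n}) \<longlonglongrightarrow> 0"
proof -
  define V where "V i x = min ((w i x)^2) K - m" for i x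
  define B where "B = (K + \<bar>m\<bar>)^2"
  have Vm[measurable]: "V i \<in> borel_measurable M" for i unfolding V_def by measurable
  have Vb: "\<bar>V i x\<bar> \<le> K + \<bar>m\<bar>" for i x
  proof -
    have "0 \<le> (w i x)^2" by simp
    then show ?thesis unfolding V_def using K by (smt (verit))
  qed
  have Vb2: "(V i x)^2 \<le> B" for i x
    unfolding B_def using Vb[of i x] by (metis abs_ge_zero power2_abs power_mono)
  have indV: "indep_vars (\<lambda>_. borel) V UNIV"
    unfolding V_def by (rule indep_vars_compose2[OF ind, where Y="\<lambda>i y. min (y^2) K - m"]) measurable
  have int1: "integrable M (V i)" for i
    by (rule integrable_const_bound[where B="K + \<bar>m\<bar>"]) (use Vb in auto)
  have int2: "integrable M (\<lambda>x. (V i x)^2)" for i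
    by (rule integrable_const_bound[where B="B"]) (use Vb2 in auto)
  have intm: "integrable M (\<lambda>x. min ((w i x)^2) K)" for i
    by (rule integrable_const_bound[where B="K"]) (use K in auto)
  have mean: "expectation (V i) = 0" for i
    unfolding V_def using m[of i] intm[of i] prob_space by simp
  have EV2: "expectation (\<lambda>x. (V i x)^2) \<le> B" for i
  proof -
    have "expectation (\<lambda>x. (V i x)^2) \<le> expectation (\<lambda>x. B)"
      by (rule integral_mono) (use int2 Vb2 in auto)
    then show ?thesis using prob_space by simp
  qed
  define D where "D = B / (m - Mm)^2"
  have bound: "measure M {x\<in>space M. (\<Sum>i<n. (w i x)^2) \<le> Mm * n} \<le> D / real n" if n: "n \<ge> 1" for n
  proof -
    have G: "integrable M (\<lambda>x. (\<Sum>i<n. 1 * V i x)^2) \<and>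
      expectation (\<lambda>x. (\<Sum>i<n. 1 * V i x)^2) = (\<Sum>i<n. 1^2 * expectation (\<lambda>x. (V i x)^2))"
      by (rule sum_sq_indep[OF indV int1 int2 mean])
    have E: "expectation (\<lambda>x. (\<Sum>i<n. V i x)^2) \<le> n * B"
    proof -
      have "expectation (\<lambda>x. (\<Sum>i<n. V i x)^2) = (\<Sum>i<n. expectation (\<lambda>x. (V i x)^2))"
        using G by simp
      also have "\<dots> \<le> (\<Sum>i<n. B)" by (rule sum_mono) (use EV2 in auto)
      finally show ?thesis by simp
    qed
    define c where "c = ((m - Mm) * n)^2"
    have cpos: "c > 0" unfolding c_def using lt n by auto
    have sub: "{x\<in>space M. (\<Sum>i<n. (w i x)^2) \<le> Mm * n} \<subseteq> {x\<in>space M. c \<le> (\<Sum>i<n. V i x)^2}"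
    proof safe
      fix x assume x: "x \<in> space M" "(\<Sum>i<n. (w i x)^2) \<le> Mm * n"
      have "(\<Sum>i<n. V i x) = (\<Sum>i<n. min ((w i x)^2) K) - n * m"
        unfolding V_def by (simp add: sum_subtractf)
      also have "\<dots> \<le> (\<Sum>i<n. (w i x)^2) - n * m"
        by (simp add: sum_mono)
      also have "\<dots> \<le> - ((m - Mm) * n)" using x by (simp add: algebra_simps)
      finally have le: "(\<Sum>i<n. V i x) \<le> - ((m - Mm) * n)" .
      have "0 \<le> (m - Mm) * n" using lt by simp
      then have "((m - Mm) * n)^2 \<le> (\<Sum>i<n. V i x)^2"
        using le by (smt (verit) power_mono power2_minus)
      then show "c \<le> (\<Sum>i<n. V i x)^2" unfolding c_def .
    qed
    have "measure M {x\<in>space M. (\<Sum>i<n. (w i x)^2) \<le> Mm * n} \<le> measure M {x\<in>space M. c \<le> (\<Sum>i<n. V i x)^2}"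
      by (rule finite_measure_mono[OF sub]) measurable
    also have "\<dots> \<le> expectation (\<lambda>x. (\<Sum>i<n. V i x)^2) / c"
      by (rule integral_Markov_inequality_measure[where A="space M"]) (use G cpos in auto)
    also have "\<dots> \<le> (n * B) / c"
      using E cpos by (simp add: divide_right_mono)
    also have "\<dots> = D / real n"
    proof -
      have a: "m - Mm \<noteq> 0" using lt by simp
      have b: "real n \<noteq> 0" using n by simp
      show ?thesis unfolding c_def D_def power_mult_distrib using a b
        by (simp add: divide_simps power2_eq_square)
    qed
    finally show ?thesis .
  qed
  have lim: "(\<lambda>n. D / real n) \<longlonglongrightarrow> 0"
    by (intro tendsto_divide_0[OF tendsto_const] filterlim_at_top_imp_at_infinity filterlim_real_sequentially)
  show ?thesis
  proof (rule tendsto_sandwich[OF _ _ tendsto_const lim])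
    show "\<forall>\<^sub>F n in sequentially. 0 \<le> measure M {x\<in>space M. (\<Sum>i<n. (w i x)^2) \<le> Mm * n}" by simp
    show "\<forall>\<^sub>F n in sequentially. measure M {x\<in>space M. (\<Sum>i<n. (w i x)^2) \<le> Mm * n} \<le> D / real n"
      using eventually_ge_at_top[of "1::nat"] by (rule eventually_mono) (rule bound)
  qed
qed

lemma trunc_exists:
  fixes P :: "real measure"
  assumes ps: "prob_space P" and sP: "sets P = sets borel"
  and fin: "integrable P (\<lambda>x. x^2) \<Longrightarrow> Mm < (\<integral>x. x^2 \<partial>P)"
  shows "\<exists>K>0. Mm < (\<integral>x. min (x^2) K \<partial>P)"
proof -
  interpret prob_space P by (rule ps)
  have bm: "f \<in> borel_measurable borel \<Longrightarrow> f \<in> borel_measurable P" for f :: "real \<Rightarrow> real"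
    by (simp add: measurable_cong_sets[OF sP refl])
  define s where "s k x = min (x^2) (real k + 1)" for k :: nat and x :: real
  define I where "I k = (\<integral>x. s k x \<partial>P)" for k
  have sm: "s k \<in> borel_measurable P" for k unfolding s_def by (rule bm) measurable
  have x2m: "(\<lambda>x::real. x^2) \<in> borel_measurable P" by (rule bm) measurable
  have sint: "integrable P (s k)" for k
    by (rule integrable_const_bound[where B="real k + 1"]) (auto simp: s_def sm)
  have slim: "(\<lambda>k. s k x) \<longlonglongrightarrow> x^2" for x
  proof (rule tendsto_eventually)
    obtain N :: nat where N: "x^2 \<le> real N" using real_arch_simple by blast
    show "\<forall>\<^sub>F k in sequentially. s k x = x^2"
      using eventually_ge_at_top[of N] by (rule eventually_mono) (use N in \<open>auto simp: s_def\<close>)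
  qed
  have sbd: "norm (s k x) \<le> x^2" for k x by (simp add: s_def)
  have spos: "0 \<le> s k x" for k x by (simp add: s_def)
  have smono: "mono (\<lambda>k. s k x)" for x
    by (rule monoI) (auto simp: s_def min_def)
  have "\<exists>k. Mm < I k"
  proof (cases "integrable P (\<lambda>x. x^2)")
    case True
    have "I \<longlonglongrightarrow> (\<integral>x. x^2 \<partial>P)"
      unfolding I_def
      by (rule integral_dominated_convergence[where w="\<lambda>x. x^2"])
         (use True sm x2m slim sbd in auto)
    moreover have "Mm < (\<integral>x. x^2 \<partial>P)" using fin True by simp
    ultimately have "\<forall>\<^sub>F k in sequentially. Mm < I k" by (rule order_tendstoD)
    then show ?thesis by (metis eventually_sequentially order_refl)
  next
    case False
    show ?thesis
    proof (rule ccontr)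
      assume "\<not> ?thesis"
      then have le: "I k \<le> Mm" for k by (simp add: not_less)
      have inc: "incseq I"
        unfolding I_def incseq_def
        by (auto intro!: integral_mono sint simp: s_def)
      have "I \<longlonglongrightarrow> (SUP k. I k)"
        by (rule LIMSEQ_incseq_SUP[OF _ inc]) (use le in \<open>auto intro!: bdd_aboveI[where M=Mm]\<close>)
      then have "integrable P (\<lambda>x. x^2)"
        unfolding I_def
        by (rule integral_monotone_convergence_nonneg(1)[rotated 4])
           (use sint smono spos slim x2m in auto)
      then show False using False by simp
    qed
  qed
  then obtain k where "Mm < I k" by blast
  then show ?thesis unfolding I_def s_def
    by (intro exI[of _ "real k + 1"]) auto
qed

lemma key_pos:
  fixes b S T \<delta> :: real
  assumes "0 \<le> S" "S > 0" "\<bar>T\<bar>/(b*S) > \<delta>" "\<delta> > 0"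
  shows "b > 0" "\<bar>T\<bar> > \<delta> * b * S"
proof -
  have "b*S > 0"
  proof (rule ccontr)
    assume "\<not> b*S > 0"
    then have "\<bar>T\<bar>/(b*S) \<le> 0" by (simp add: divide_nonneg_nonpos)
    then show False using assms by simp
  qed
  then show "b > 0" using assms by (simp add: zero_less_mult_iff)
  show "\<bar>T\<bar> > \<delta> * b * S" using assms \<open>b*S > 0\<close> by (simp add: less_divide_eq mult_ac)
qed

lemma keyA:
  fixes b S T \<delta> Mm n Q :: real
  assumes "b \<noteq> 0" "0 \<le> S" "b*S = 0 \<or> \<bar>T\<bar>/(b*S) > \<delta>" "\<delta>>0" "Mm>0" "n>0" "1/\<bar>b\<bar> \<le> Q"
  shows "S \<le> Mm*n \<or> (\<delta>*Mm*n/Q)^2 \<le> T^2"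
proof (cases "S \<le> Mm*n")
  case True then show ?thesis by simp
next
  case False
  then have S: "S > Mm*n" by simp
  have "Mm * n > 0" using assms by simp
  then have Sp: "S > 0" using S by linarith
  then have "b*S \<noteq> 0" using assms by simp
  then have r: "\<bar>T\<bar>/(b*S) > \<delta>" using assms by simp
  have bp: "b > 0" and Tb: "\<bar>T\<bar> > \<delta> * b * S" using key_pos[OF assms(2) Sp r assms(4)] by auto
  have b1: "1/b \<le> Q" using assms(7) bp by simp
  have "0 < 1/b" using bp by simp
  then have Qp: "Q > 0" using b1 by linarith
  have bQ: "1 \<le> Q * b" using b1 bp by (simp add: divide_le_eq)
  have "1/Q \<le> b" using bQ Qp by (simp add: divide_le_eq mult.commute)
  moreover have A: "0 \<le> \<delta>*Mm*n" using assms by simp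
  ultimately have "\<delta>*Mm*n * (1/Q) \<le> \<delta>*Mm*n*b" by (rule mult_left_mono)
  then have "\<delta>*Mm*n/Q \<le> \<delta>*Mm*n*b" by simp
  also have "\<dots> \<le> \<delta> * b * S" using S bp assms by (simp add: mult_left_mono mult_ac)
  also have "\<dots> < \<bar>T\<bar>" by (rule Tb)
  finally have "\<delta>*Mm*n/Q < \<bar>T\<bar>" .
  moreover have "0 \<le> \<delta>*Mm*n/Q" using assms Qp by simp
  ultimately have "(\<delta>*Mm*n/Q)^2 \<le> \<bar>T\<bar>^2" by (intro power_mono) auto
  then show ?thesis by simp
qed

lemma keyB:
  fixes b S T \<delta> Mm n Q R :: real
  assumes "b \<noteq> 0" "0 \<le> S" "b*S = 0 \<or> \<bar>T\<bar>/(b*S) > \<delta>" "\<delta>>0" "Mm>0" "n>0" "1/\<bar>b\<bar> \<le> Q"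
    "T^2 \<le> R*S" "R*Q^2 \<le> \<delta>^2*Mm*n"
  shows "S \<le> Mm*n"
proof (rule ccontr)
  assume "\<not> S \<le> Mm*n"
  then have S: "S > Mm*n" by simp
  have "Mm * n > 0" using assms by simp
  then have Sp: "S > 0" using S by linarith
  then have "b*S \<noteq> 0" using assms by simp
  then have r: "\<bar>T\<bar>/(b*S) > \<delta>" using assms by simp
  have bp: "b > 0" and Tb: "\<bar>T\<bar> > \<delta> * b * S" using key_pos[OF assms(2) Sp r assms(4)] by auto
  have b1: "1/b \<le> Q" using assms(7) bp by simp
  have "0 < 1/b" using bp by simp
  then have Qp: "Q > 0" using b1 by linarith
  have bQ: "1 \<le> b * Q" using b1 bp by (simp add: divide_le_eq mult.commute)
  have "(\<delta> * b * S)^2 < \<bar>T\<bar>^2"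
    using Tb assms bp Sp by (intro power_strict_mono) auto
  then have "(\<delta> * b * S)^2 < R * S" using assms(8) by simp
  then have "\<delta>^2 * b^2 * S < R" using Sp by (simp add: power2_eq_square) (smt (verit) mult.assoc mult.commute mult_less_cancel_right_pos)
  then have "\<delta>^2 * b^2 * S * Q^2 < R * Q^2" using Qp by simp
  moreover have "\<delta>^2 * S \<le> \<delta>^2 * b^2 * S * Q^2"
  proof -
    have "1 \<le> (b*Q)^2" using bQ by (smt (verit) one_le_power)
    then have "\<delta>^2 * S * 1 \<le> \<delta>^2 * S * (b*Q)^2" using Sp by (intro mult_left_mono) auto
    then show ?thesis by (simp add: power_mult_distrib mult_ac)
  qed
  ultimately have "\<delta>^2 * S < \<delta>^2 * (Mm*n)" using assms(9) by (simp add: mult_ac)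
  then have "S < Mm * n" using assms(4) by simp
  then show False using S by simp
qed

lemma inv_bound:
  fixes p C y :: real
  assumes "0 < p" "1/p \<le> C*y" "C > 0" "0 \<le> y"
  shows "y > 0" "1/y \<le> C*p"
proof -
  have "0 < 1/p" using assms by simp
  then have "C*y > 0" using assms by linarith
  then show yp: "y > 0" using assms by (simp add: zero_less_mult_iff)
  have "1 \<le> C*y*p" using assms by (simp add: divide_le_eq mult.commute)
  then show "1/y \<le> C*p" using yp by (simp add: divide_le_eq mult_ac)
qed

lemma powr_identity:
  fixes n t :: real
  assumes "n > 0" "0 \<le> t"
  shows "n powr ((1-t)/(1+t)) * (n powr (t/(1+t)))^2 = n"
proof -
  have e: "(1-t)/(1+t) + t/(1+t) + t/(1+t) = 1" using assms by (simp add: field_simps)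
  have "n powr ((1-t)/(1+t)) * (n powr (t/(1+t)))^2 =
      n powr ((1-t)/(1+t) + t/(1+t) + t/(1+t))"
    by (simp only: powr_add power2_eq_square mult.assoc)
  also have "\<dots> = n" using e assms by simp
  finally show ?thesis .
qed


lemma classP_facts:
  assumes "distr_class 1 P \<or> distr_class 2 P"
  shows "\<exists>s>0. distr_class s P"
  using assms by (metis zero_less_one zero_less_numeral)

theorem lemmaA4:
  fixes M :: "'a measure" and P :: "real measure"
    and w :: "nat \<Rightarrow> 'a \<Rightarrow> real"
    and g :: "nat \<Rightarrow> nat \<Rightarrow> real"
    and b :: "nat \<Rightarrow> real"
    and t \<delta> :: real
  assumes "prob_space M"
    and "0 \<le> t" "t \<le> 1"
    and g_bound: "\<exists>C. \<forall>\<^sub>F n in sequentially.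
                   \<bar>\<Sum>i<n. (g n i)\<^sup>2\<bar> \<le> C * \<bar>real n powr ((1 - t) / (1 + t))\<bar>"
    and b_bound: "\<exists>C>0. \<forall>\<^sub>F n in sequentially.
                   \<bar>real n powr (- t / (1 + t))\<bar> \<le> C * \<bar>b n\<bar>"
    and meas: "\<And>i. w i \<in> borel_measurable M"
    and indep: "prob_space.indep_vars M (\<lambda>_. borel) w UNIV"
    and ident: "\<And>i. distr M borel (w i) = P"
    and classP: "distr_class 1 P \<or> distr_class 2 P"
    and "\<delta> > 0"
  shows "(\<lambda>n. measure M {x \<in> space M.
            b n * (\<Sum>i<n. (w i x)\<^sup>2) = 0 \<or>
            \<bar>\<Sum>i<n. w i x * g n i\<bar> / (b n * (\<Sum>i<n. (w i x)\<^sup>2)) > \<delta>})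
         \<longlonglongrightarrow> 0"
proof -
  interpret M: prob_space M by fact
  note meas[measurable]
  define \<alpha> where "\<alpha> = (1 - t) / (1 + t)"
  define \<beta> where "\<beta> = t / (1 + t)"
  define E where "E n = {x \<in> space M.
            b n * (\<Sum>i<n. (w i x)\<^sup>2) = 0 \<or>
            \<bar>\<Sum>i<n. w i x * g n i\<bar> / (b n * (\<Sum>i<n. (w i x)\<^sup>2)) > \<delta>}" for n
  define S where "S n x = (\<Sum>i<n. (w i x)\<^sup>2)" for n x
  define T where "T n x = (\<Sum>i<n. w i x * g n i)" for n x
  have Em[measurable]: "E n \<in> sets M" for n unfolding E_def by measurable
  obtain Cg where Cg: "\<forall>\<^sub>F n in sequentially.
       \<bar>\<Sum>i<n. (g n i)\<^sup>2\<bar> \<le> Cg * \<bar>real n powr \<alpha>\<bar>" using g_bound unfolding \<alpha>_def by blast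
  obtain Cb where Cbp: "Cb > 0" and Cb: "\<forall>\<^sub>F n in sequentially.
       \<bar>real n powr (- \<beta>)\<bar> \<le> Cb * \<bar>b n\<bar>" using b_bound unfolding \<beta>_def by auto
  define Cg' where "Cg' = max Cg 0"
  have Cg'0: "Cg' \<ge> 0" unfolding Cg'_def by simp
  define Q where "Q n = Cb * real n powr \<beta>" for n
  define good where "good n \<longleftrightarrow> n \<ge> 1 \<and> b n \<noteq> 0 \<and> 1 / \<bar>b n\<bar> \<le> Q n \<and>
      (\<Sum>i<n. (g n i)\<^sup>2) \<le> Cg' * real n powr \<alpha>" for n
  have ev_good: "\<forall>\<^sub>F n in sequentially. good n"
    using Cg Cb eventually_ge_at_top[of "1::nat"]
  proof eventually_elim
    case (elim n)
    have np: "real n > 0" using elim by simp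
    have pb: "0 < real n powr \<beta>" using np by simp
    have "1 / real n powr \<beta> \<le> Cb * \<bar>b n\<bar>"
      using elim(2) np by (simp add: powr_minus_divide)
    from inv_bound[OF pb this Cbp] have "\<bar>b n\<bar> > 0" "1 / \<bar>b n\<bar> \<le> Q n"
      unfolding Q_def by auto
    moreover have "(\<Sum>i<n. (g n i)\<^sup>2) \<le> Cg' * real n powr \<alpha>"
    proof -
      have "(\<Sum>i<n. (g n i)\<^sup>2) \<le> Cg * real n powr \<alpha>" using elim(1) by simp
      also have "\<dots> \<le> Cg' * real n powr \<alpha>" unfolding Cg'_def
        by (intro mult_right_mono) auto
      finally show ?thesis .
    qed
    ultimately show ?case using elim(3) unfolding good_def by auto
  qed
  have RQ: "Cg' * real n powr \<alpha> * (Q n)^2 = Cg' * Cb^2 * real n" if "n \<ge> 1" for n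
  proof -
    have "real n powr \<alpha> * (real n powr \<beta>)^2 = real n"
      unfolding \<alpha>_def \<beta>_def using that \<open>0 \<le> t\<close> by (intro powr_identity) auto
    then show ?thesis unfolding Q_def by (simp add: power_mult_distrib mult_ac)
  qed
  have ident0: "distr M borel (w i) = distr M borel (w 0)" for i using ident by simp
  obtain s where "s > 0" and dc: "distr_class s P" using classP_facts[OF classP] by blast
  have psP: "prob_space P" and sP: "sets P = sets borel" and intP: "integrable P (\<lambda>x. x)"
    and meanP: "(\<integral>x. x \<partial>P) = 0" and intsP: "integrable P (\<lambda>x. \<bar>x\<bar> powr s)"
    and ge1: "1 \<le> (\<integral>x. \<bar>x\<bar> powr s \<partial>P)"
    using dc unfolding distr_class_def by auto
  have toM: "(\<integral>y. f y \<partial>P) = M.expectation (\<lambda>x. f (w i x))" if "f \<in> borel_measurable borel" for f :: "real \<Rightarrow> real" and i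
    using integral_distr[of "w i" M borel f] that ident[of i] by simp
  have toMi: "integrable P f \<longleftrightarrow> integrable M (\<lambda>x. f (w i x))" if "f \<in> borel_measurable borel" for f :: "real \<Rightarrow> real" and i
    using integrable_distr_eq[of "w i" M borel f] that ident[of i] by simp
  have main: "(\<lambda>n. measure M (E n)) \<longlonglongrightarrow> 0"
  proof (cases "integrable P (\<lambda>x. x^2)")
    case True
    define \<sigma>2 where "\<sigma>2 = (\<integral>x. x^2 \<partial>P)"
    have "\<sigma>2 \<noteq> 0"
    proof
      assume "\<sigma>2 = 0"
      have "AE x in P. x^2 = 0"
        using integral_nonneg_eq_0_iff_AE[OF True] \<open>\<sigma>2 = 0\<close> unfolding \<sigma>2_def by simp
      then have AE0: "AE x in P. \<bar>x\<bar> powr s = 0"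
        by (rule AE_mp) simp
      have m1: "(\<lambda>x::real. \<bar>x\<bar> powr s) \<in> borel_measurable P"
        by (simp add: measurable_cong_sets[OF sP refl])
      have "(\<integral>x. \<bar>x\<bar> powr s \<partial>P) = (\<integral>x. 0 \<partial>P)"
        by (rule integral_cong_AE[OF m1 _ AE0]) simp
      then show False using ge1 by simp
    qed
    moreover have "\<sigma>2 \<ge> 0" unfolding \<sigma>2_def by simp
    ultimately have \<sigma>p: "\<sigma>2 > 0" by simp
    define Mm where "Mm = \<sigma>2 / 2"
    have Mmp: "Mm > 0" unfolding Mm_def using \<sigma>p by simp
    obtain K where Kp: "K > 0" and K: "Mm < (\<integral>x. min (x^2) K \<partial>P)"
      using trunc_exists[OF psP sP, of Mm] unfolding Mm_def \<sigma>2_def using \<sigma>p \<sigma>2_def by auto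
    have L: "(\<lambda>n. measure M {x\<in>space M. (\<Sum>i<n. (w i x)^2) \<le> Mm * n}) \<longlonglongrightarrow> 0"
    proof (rule M.sumsq_lower[OF meas indep Kp _ K])
      have "(\<lambda>y::real. min (y^2) K) \<in> borel_measurable borel" by measurable
      from toM[OF this] show "M.expectation (\<lambda>x. min ((w i x)\<^sup>2) K) = (\<integral>x. min (x^2) K \<partial>P)" for i
        by simp
    qed
    have idm: "(\<lambda>x::real. x) \<in> borel_measurable borel" by simp
    have sqm: "(\<lambda>x::real. x^2) \<in> borel_measurable borel" by simp
    have intw: "integrable M (w i)" for i using toMi[OF idm, of i] intP by simp
    have intw2: "integrable M (\<lambda>x. (w i x)^2)" for i using toMi[OF sqm, of i] True by simp
    have meanw: "M.expectation (w i) = 0" for i using toM[OF idm, of i] meanP by simp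
    have Ew2: "M.expectation (\<lambda>x. (w i x)^2) = \<sigma>2" for i using toM[OF sqm, of i] unfolding \<sigma>2_def by simp
    define D where "D = \<sigma>2 * Cg' * Cb^2 / (\<delta> * Mm)^2"
    define A where "A n = {x\<in>space M. (\<Sum>i<n. (w i x)^2) \<le> Mm * n}" for n
    have bound: "measure M (E n) \<le> measure M (A n) + D / real n" if gn: "good n" for n
    proof -
      have n1: "n \<ge> 1" and bn: "b n \<noteq> 0" and bQ: "1 / \<bar>b n\<bar> \<le> Q n"
        and gs: "(\<Sum>i<n. (g n i)\<^sup>2) \<le> Cg' * real n powr \<alpha>" using gn unfolding good_def by auto
      have "0 < 1 / \<bar>b n\<bar>" using bn by simp
      then have Qp: "Q n > 0" using bQ by linarith
      define a where "a = (\<delta> * Mm * real n / Q n)^2"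
      have ap: "a > 0" unfolding a_def using Qp n1 Mmp \<open>\<delta> > 0\<close> by simp
      define B where "B = {x\<in>space M. a \<le> (\<Sum>i<n. g n i * w i x)^2}"
      have G: "integrable M (\<lambda>x. (\<Sum>i<n. g n i * w i x)^2) \<and>
          M.expectation (\<lambda>x. (\<Sum>i<n. g n i * w i x)^2) = (\<Sum>i<n. (g n i)^2 * M.expectation (\<lambda>x. (w i x)^2))"
        by (rule M.sum_sq_indep[OF indep intw intw2 meanw])
      have sub: "E n \<subseteq> A n \<union> B"
      proof
        fix x assume x: "x \<in> E n"
        have S0: "0 \<le> (\<Sum>i<n. (w i x)^2)" by (simp add: sum_nonneg)
        have "(\<Sum>i<n. (w i x)^2) \<le> Mm * real n \<or> a \<le> (\<Sum>i<n. w i x * g n i)^2"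
          unfolding a_def
          by (rule keyA[OF bn S0 _ \<open>\<delta> > 0\<close> Mmp _ bQ]) (use x n1 in \<open>auto simp: E_def\<close>)
        moreover have "(\<Sum>i<n. w i x * g n i) = (\<Sum>i<n. g n i * w i x)" by (simp add: mult.commute)
        ultimately show "x \<in> A n \<union> B" using x unfolding A_def B_def E_def by auto
      qed
      have "measure M (E n) \<le> measure M (A n \<union> B)"
        by (rule M.finite_measure_mono[OF sub]) (unfold A_def B_def, measurable)
      also have "\<dots> \<le> measure M (A n) + measure M B"
        by (rule measure_Un_le) (unfold A_def B_def, measurable)
      also have "measure M B \<le> M.expectation (\<lambda>x. (\<Sum>i<n. g n i * w i x)^2) / a"
        unfolding B_def
        by (rule integral_Markov_inequality_measure[where A="space M"]) (use G ap in auto)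
      also have "M.expectation (\<lambda>x. (\<Sum>i<n. g n i * w i x)^2) = \<sigma>2 * (\<Sum>i<n. (g n i)^2)"
        using G Ew2 by (simp add: sum_distrib_left mult_ac)
      also have "\<sigma>2 * (\<Sum>i<n. (g n i)^2) / a \<le> \<sigma>2 * (Cg' * real n powr \<alpha>) / a"
        using gs \<sigma>p ap by (intro divide_right_mono mult_left_mono) auto
      also have "\<sigma>2 * (Cg' * real n powr \<alpha>) / a = D / real n"
      proof -
        have "\<sigma>2 * (Cg' * real n powr \<alpha>) / a = \<sigma>2 * (Cg' * real n powr \<alpha> * (Q n)^2) / (\<delta> * Mm * real n)^2"
          unfolding a_def using Qp by (simp add: power_divide)
        also have "\<dots> = \<sigma>2 * (Cg' * Cb^2 * real n) / (\<delta> * Mm * real n)^2" using RQ[OF n1] by simp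
        also have "\<dots> = D / real n" unfolding D_def using n1 Mmp \<open>\<delta> > 0\<close>
          by (simp add: power_mult_distrib power2_eq_square)
        finally show ?thesis .
      qed
      finally show ?thesis by simp
    qed
    have lim: "(\<lambda>n. measure M (A n) + D / real n) \<longlonglongrightarrow> 0 + 0"
      unfolding A_def
      by (intro tendsto_add L tendsto_divide_0[OF tendsto_const] filterlim_at_top_imp_at_infinity filterlim_real_sequentially)
    show ?thesis
    proof (rule tendsto_sandwich[OF _ _ tendsto_const])
      show "\<forall>\<^sub>F n in sequentially. 0 \<le> measure M (E n)" by simp
      show "\<forall>\<^sub>F n in sequentially. measure M (E n) \<le> measure M (A n) + D / real n"
        using ev_good by (rule eventually_mono) (rule bound)
      show "(\<lambda>n. measure M (A n) + D / real n) \<longlonglongrightarrow> 0" using lim by simp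
    qed
  next
    case False
    define Mm where "Mm = Cg' * Cb^2 / \<delta>^2 + 1"
    have Mmp: "Mm > 0" unfolding Mm_def using Cg'0 by (simp add: add_nonneg_pos)
    obtain K where Kp: "K > 0" and K: "Mm < (\<integral>x. min (x^2) K \<partial>P)"
      using trunc_exists[OF psP sP, of Mm] False by auto
    have L: "(\<lambda>n. measure M {x\<in>space M. (\<Sum>i<n. (w i x)^2) \<le> Mm * n}) \<longlonglongrightarrow> 0"
    proof (rule M.sumsq_lower[OF meas indep Kp _ K])
      have "(\<lambda>y::real. min (y^2) K) \<in> borel_measurable borel" by measurable
      from toM[OF this] show "M.expectation (\<lambda>x. min ((w i x)\<^sup>2) K) = (\<integral>x. min (x^2) K \<partial>P)" for i
        by simp
    qed
    have sub: "E n \<subseteq> {x\<in>space M. (\<Sum>i<n. (w i x)^2) \<le> Mm * n}" if gn: "good n" for n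
    proof
      fix x assume x: "x \<in> E n"
      have n1: "n \<ge> 1" and bn: "b n \<noteq> 0" and bQ: "1 / \<bar>b n\<bar> \<le> Q n"
        and gs: "(\<Sum>i<n. (g n i)\<^sup>2) \<le> Cg' * real n powr \<alpha>" using gn unfolding good_def by auto
      have S0: "0 \<le> (\<Sum>i<n. (w i x)^2)" by (simp add: sum_nonneg)
      have "(\<Sum>i<n. w i x * g n i)^2 \<le> (\<Sum>i<n. (w i x)^2) * (\<Sum>i<n. (g n i)^2)"
        by (rule Cauchy_Schwarz_ineq_sum)
      also have "\<dots> \<le> (\<Sum>i<n. (w i x)^2) * (Cg' * real n powr \<alpha>)"
        by (rule mult_left_mono[OF gs S0])
      finally have CS: "(\<Sum>i<n. w i x * g n i)^2 \<le> (Cg' * real n powr \<alpha>) * (\<Sum>i<n. (w i x)^2)"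
        by (simp add: mult_ac)
      have RQ': "(Cg' * real n powr \<alpha>) * (Q n)^2 \<le> \<delta>^2 * Mm * real n"
      proof -
        have "\<delta>^2 * Mm = Cg' * Cb^2 + \<delta>^2" unfolding Mm_def using \<open>\<delta> > 0\<close> by (simp add: field_simps)
        then have "\<delta>^2 * Mm * real n = Cg' * Cb^2 * real n + \<delta>^2 * real n" by (simp add: algebra_simps)
        moreover have "0 \<le> \<delta>^2 * real n" by simp
        ultimately show ?thesis using RQ[OF n1] by linarith
      qed
      have "(\<Sum>i<n. (w i x)^2) \<le> Mm * real n"
        by (rule keyB[OF bn S0 _ \<open>\<delta> > 0\<close> Mmp _ bQ CS RQ'])
           (use x n1 in \<open>auto simp: E_def\<close>)
      then show "x \<in> {x\<in>space M. (\<Sum>i<n. (w i x)^2) \<le> Mm * n}" using x by (auto simp: E_def)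
    qed
    show ?thesis
    proof (rule tendsto_sandwich[OF _ _ tendsto_const L])
      show "\<forall>\<^sub>F n in sequentially. 0 \<le> measure M (E n)" by simp
      show "\<forall>\<^sub>F n in sequentially. measure M (E n) \<le> measure M {x\<in>space M. (\<Sum>i<n. (w i x)^2) \<le> Mm * n}"
        using ev_good by (rule eventually_mono) (intro M.finite_measure_mono sub, measurable)
    qed
  qed
  then show ?thesis unfolding E_def .
qed

end
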